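(* Let $(\ell_{i:n})_{0\le i\le n\le m}$ be reals with $\ell_{0:n}=-1$, $n\mapsto\ell_{i:n}$ nonincreasing and $i\mapsto\ell_{i:n}$ nondecreasing, and let $\varphi_A=\max_{1\le i\le|A|}\mathbf 1\{p_{(i:A)}\le\ell_{i:|A|}\}$ ($\varphi_\emptyset=0$). Assume this is a family of local tests at level $\alpha$: for all $\mu\in\mathfrak F$, $\mathbb P_\mu(\varphi_{\mathcal H_0(\mu)}=1)\le\alpha$. Let $$\hat m_0=\max\{n\in\{0,\dots,m\}:\forall t\in[0,1],\ t>\ell_{((n+i(t)-m)\vee0):n}\},$$ and the reference family $\mathfrak R=(R_k,k-1)_{1\le k\le\hat m_0+1}$ with $R_k=\{i:p_i\le\ell_{k:\hat m_0}\}$ for $1\le k\le\hat m_0$ and $R_{\hat m_0+1}=\{1,\dots,m\}$. Then $\mathrm{JER}_\mu(\mathfrak R)\le\alpha$ for all $\mu\in\mathfrak F$, and $\hat V^{\mathrm{IP}}_\varphi(S)=\hat V^{\mathrm{JER}}_{\mathfrak R}(S)$ for all $S\subseteq\{1,\dots,m\}$.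
   Context: Data $X\sim\mu\in\mathfrak F$, null hypotheses $H_1,\dots,H_m\subseteq\mathfrak F$, $\mathcal H_0(\mu)=\{i:\mu\in H_i\}$, $p$-values $p_i\in[0,1]$; $p_{(i:A)}$ is the $i$-th smallest of $(p_j)_{j\in A}$; $i(t)=\#\{j:p_j\le t\}$. Inversion bound: $\hat V^{\mathrm{IP}}_\varphi(S)=\max\{|A\cap S|:A\subseteq\{1,\dots,m\},\varphi_A=0\}$. For a reference family $\mathfrak R=(R_k,\zeta_k)_{k\in\mathcal K}$: $\mathrm{JER}_\mu(\mathfrak R)=\mathbb P_\mu(\exists k:|R_k\cap\mathcal H_0(\mu)|>\zeta_k)$, $\mathfrak A(\mathfrak R)=\{A\subseteq\{1,\dots,m\}:\forall k,\ |R_k\cap A|\le\zeta_k\}$, $\hat V^{\mathrm{JER}}_{\mathfrak R}(S)=\max_{A\in\mathfrak A(\mathfrak R)}|S\cap A|$. *)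

theory Defs
  imports "HOL-Probability.Probability"
begin

text \<open>Hypothesis indices are 1..m. A p-value vector is q :: nat => real.\<close>

definition pord :: "(nat \<Rightarrow> real) \<Rightarrow> nat set \<Rightarrow> nat \<Rightarrow> real" where
  "pord q A i = sort (map q (sorted_list_of_set A)) ! (i - 1)"

text \<open>Local test phi_A = max over 1<=i<=|A| of 1{p_(i:A) <= l_(i:|A|)}, as a bool (True = reject).\<close>
definition phi :: "(nat \<Rightarrow> nat \<Rightarrow> real) \<Rightarrow> (nat \<Rightarrow> real) \<Rightarrow> nat set \<Rightarrow> bool" where
  "phi l q A = (\<exists>i\<in>{1..card A}. pord q A i \<le> l i (card A))"

definition icount :: "nat \<Rightarrow> (nat \<Rightarrow> real) \<Rightarrow> real \<Rightarrow> nat" where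
  "icount m q t = card {j \<in> {1..m}. q j \<le> t}"

text \<open>Nat subtraction truncates at 0, giving (n + i(t) - m) v 0.\<close>
definition mhat0 :: "(nat \<Rightarrow> nat \<Rightarrow> real) \<Rightarrow> nat \<Rightarrow> (nat \<Rightarrow> real) \<Rightarrow> nat" where
  "mhat0 l m q = Max {n \<in> {0..m}. \<forall>t\<in>{0..1}. t > l (n + icount m q t - m) n}"

definition Rref :: "(nat \<Rightarrow> nat \<Rightarrow> real) \<Rightarrow> nat \<Rightarrow> (nat \<Rightarrow> real) \<Rightarrow> nat \<Rightarrow> nat set" where
  "Rref l m q k = (if k \<le> mhat0 l m q then {i \<in> {1..m}. q i \<le> l k (mhat0 l m q)} else {1..m})"

definition V_IP :: "nat \<Rightarrow> (nat set \<Rightarrow> bool) \<Rightarrow> nat set \<Rightarrow> nat" where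
  "V_IP m \<phi> S = Max {card (A \<inter> S) | A. A \<subseteq> {1..m} \<and> \<not> \<phi> A}"

definition JER_event :: "nat set \<Rightarrow> (nat \<Rightarrow> nat set) \<Rightarrow> (nat \<Rightarrow> nat) \<Rightarrow> nat set \<Rightarrow> bool" where
  "JER_event K R \<zeta> H0 = (\<exists>k\<in>K. card (R k \<inter> H0) > \<zeta> k)"

definition Aset :: "nat \<Rightarrow> nat set \<Rightarrow> (nat \<Rightarrow> nat set) \<Rightarrow> (nat \<Rightarrow> nat) \<Rightarrow> nat set set" where
  "Aset m K R \<zeta> = {A. A \<subseteq> {1..m} \<and> (\<forall>k\<in>K. card (R k \<inter> A) \<le> \<zeta> k)}"

definition V_JER :: "nat \<Rightarrow> nat set \<Rightarrow> (nat \<Rightarrow> nat set) \<Rightarrow> (nat \<Rightarrow> nat) \<Rightarrow> nat set \<Rightarrow> nat" where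
  "V_JER m K R \<zeta> S = Max ((\<lambda>A. card (S \<inter> A)) ` Aset m K R \<zeta>)"

end

theory Submission
  imports Defs
begin

lemma pord_le_iff:
  assumes "finite A" "1 \<le> i" "i \<le> card A"
  shows "pord q A i \<le> c \<longleftrightarrow> i \<le> card {j\<in>A. q j \<le> c}"
proof -
  define xs where "xs = sort (map q (sorted_list_of_set A))"
  have len: "length xs = card A" by (simp add: xs_def)
  have sxs: "sorted xs" by (simp add: xs_def)
  have cnt: "card {j\<in>A. q j \<le> c} = card {k. k < length xs \<and> xs!k \<le> c}"
  proof -
    have "length (filter (\<lambda>v. v \<le> c) xs) = length (filter (\<lambda>v. v \<le> c) (map q (sorted_list_of_set A)))"
      unfolding xs_def by (metis mset_filter mset_sort size_mset)
    also have "\<dots> = length (filter (\<lambda>j. q j \<le> c) (sorted_list_of_set A))" by (simp add: filter_map comp_def)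
    also have "\<dots> = card {j\<in>A. q j \<le> c}" using assms by (simp add: distinct_length_filter Int_def conj_commute)
    finally show ?thesis by (simp add: length_filter_conv_card)
  qed
  have pe: "pord q A i = xs ! (i-1)" by (simp add: pord_def xs_def)
  show ?thesis
  proof
    assume a: "pord q A i \<le> c"
    have "{0..<i} \<subseteq> {k. k < length xs \<and> xs!k \<le> c}"
    proof
      fix k assume "k \<in> {0..<i}"
      then have "k \<le> i - 1" "i - 1 < length xs" using assms len by auto
      then show "k \<in> {k. k < length xs \<and> xs!k \<le> c}"
        using sorted_nth_mono[OF sxs, of k "i-1"] a pe by auto
    qed
    then have "card {0..<i} \<le> card {k. k < length xs \<and> xs!k \<le> c}" by (intro card_mono) auto
    then show "i \<le> card {j\<in>A. q j \<le> c}" using cnt by simp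
  next
    assume a: "i \<le> card {j\<in>A. q j \<le> c}"
    show "pord q A i \<le> c"
    proof (rule ccontr)
      assume "\<not> pord q A i \<le> c"
      then have b: "xs ! (i-1) > c" using pe by simp
      have "{k. k < length xs \<and> xs!k \<le> c} \<subseteq> {0..<i-1}"
      proof
        fix k assume k: "k \<in> {k. k < length xs \<and> xs!k \<le> c}"
        show "k \<in> {0..<i-1}"
        proof (rule ccontr)
          assume "k \<notin> {0..<i-1}"
          then have "i - 1 \<le> k" by simp
          then have "xs!(i-1) \<le> xs!k" using sorted_nth_mono[OF sxs] k by auto
          then show False using k b by auto
        qed
      qed
      then have "card {k. k < length xs \<and> xs!k \<le> c} \<le> i - 1"
        by (metis card_atLeastLessThan card_mono finite_atLeastLessThan minus_nat.diff_0)
      then show False using a cnt assms by linarith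
    qed
  qed
qed

lemma phi_iff:
  assumes "finite A"
  shows "phi l q A \<longleftrightarrow> (\<exists>i\<in>{1..card A}. i \<le> card {j\<in>A. q j \<le> l i (card A)})"
  using pord_le_iff[OF assms] unfolding phi_def by auto

lemma icount_le: "icount m q t \<le> m"
proof -
  have "icount m q t \<le> card {1..m}" unfolding icount_def by (intro card_mono) auto
  then show ?thesis by simp
qed

lemma mhat_props:
  assumes l0: "\<And>n. n \<le> m \<Longrightarrow> l 0 n = -1"
  shows "mhat0 l m q \<le> m \<and> (\<forall>t\<in>{0..1}. t > l (mhat0 l m q + icount m q t - m) (mhat0 l m q))
     \<and> (\<forall>n. n \<le> m \<and> n > mhat0 l m q \<longrightarrow> (\<exists>t\<in>{0..1}. \<not> t > l (n + icount m q t - m) n))"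
proof -
  define MS where "MS = {n \<in> {0..m}. \<forall>t\<in>{0..1}. t > l (n + icount m q t - m) n}"
  have fin: "finite MS" unfolding MS_def by auto
  have "0 \<in> MS" unfolding MS_def using icount_le[of m q] l0[of 0] by auto
  then have "mhat0 l m q \<in> MS" using fin unfolding mhat0_def MS_def[symmetric] by (intro Max_in) auto
  moreover have "\<forall>n. n \<le> m \<and> n > mhat0 l m q \<longrightarrow> n \<notin> MS"
    using fin unfolding mhat0_def MS_def[symmetric] using Max_ge leD by blast
  ultimately show ?thesis unfolding MS_def by auto
qed


lemma jer_phi:
  assumes qr: "\<And>j. 0 \<le> q j \<and> q j \<le> 1"
    and l0: "\<And>n. n \<le> m \<Longrightarrow> l 0 n = -1"
    and l_n: "\<And>i n n'. i \<le> n \<Longrightarrow> n \<le> n' \<Longrightarrow> n' \<le> m \<Longrightarrow> l i n' \<le> l i n"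
    and A: "A \<subseteq> {1..m}"
    and J: "JER_event {1..mhat0 l m q + 1} (Rref l m q) (\<lambda>k. k - 1) A"
  shows "phi l q A"
proof -
  let ?M = "mhat0 l m q"
  have fA: "finite A" using A finite_subset by blast
  have nA: "card A \<le> m" using card_mono[OF _ A] by simp
  have mle: "mhat0 l m q \<le> m" and mt: "\<forall>t\<in>{0..1}. t > l (mhat0 l m q + icount m q t - m) (mhat0 l m q)"
    and mx: "\<forall>n. n \<le> m \<and> n > mhat0 l m q \<longrightarrow> (\<exists>t\<in>{0..1}. \<not> t > l (n + icount m q t - m) n)"
    using mhat_props[of m l q, OF l0] by blast+
  show ?thesis
  proof (cases "card A > ?M")
    case True
    then obtain t where t: "t \<in> {0..1}" "\<not> t > l (card A + icount m q t - m) (card A)"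
      using mx nA True by blast
    define j where "j = card A + icount m q t - m"
    have jle: "j \<le> card A" unfolding j_def using icount_le[of m q t] by simp
    have j0: "j \<noteq> 0"
    proof
      assume "j = 0"
      then show False using t l0[OF nA] unfolding j_def by auto
    qed
    have "{j \<in> {1..m}. q j \<le> t} \<subseteq> {i\<in>A. q i \<le> t} \<union> ({1..m} - A)" by auto
    then have "icount m q t \<le> card ({i\<in>A. q i \<le> t} \<union> ({1..m} - A))"
      unfolding icount_def using fA by (intro card_mono) auto
    also have "\<dots> \<le> card {i\<in>A. q i \<le> t} + card ({1..m} - A)" by (rule card_Un_le)
    also have "card ({1..m} - A) = m - card A" using A fA by (simp add: card_Diff_subset)
    finally have c1: "j \<le> card {i\<in>A. q i \<le> t}" unfolding j_def using nA by arith
    have "card {i\<in>A. q i \<le> t} \<le> card {i\<in>A. q i \<le> l j (card A)}"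
      using t fA unfolding j_def by (intro card_mono) auto
    then show ?thesis unfolding phi_iff[OF fA] using c1 jle j0
      by (intro bexI[of _ j]) auto
  next
    case False
    from J obtain k where k: "k \<in> {1..?M+1}" "card (Rref l m q k \<inter> A) > k - 1"
      unfolding JER_event_def by blast
    have kM: "k \<le> ?M"
    proof (rule ccontr)
      assume "\<not> k \<le> ?M"
      then have "k = ?M + 1" using k by auto
      then have "Rref l m q k \<inter> A = A" using A unfolding Rref_def by auto
      then show False using k False \<open>k = ?M + 1\<close> by auto
    qed
    have R: "Rref l m q k \<inter> A = {i\<in>A. q i \<le> l k ?M}" using kM A unfolding Rref_def by auto
    have ck: "k \<le> card {i\<in>A. q i \<le> l k ?M}" using k R by auto
    have "card {i\<in>A. q i \<le> l k ?M} \<le> card A" using fA by (intro card_mono) auto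
    then have kA: "k \<le> card A" using ck by linarith
    have "l k ?M \<le> l k (card A)" using l_n[OF kA] False mle by auto
    then have "card {i\<in>A. q i \<le> l k ?M} \<le> card {i\<in>A. q i \<le> l k (card A)}"
      using fA by (intro card_mono) auto
    then show ?thesis unfolding phi_iff[OF fA] using ck kA k by (intro bexI[of _ k]) auto
  qed
qed

lemma KL:
  assumes qr: "\<And>j. 0 \<le> q j \<and> q j \<le> 1"
    and l0: "\<And>n. n \<le> m \<Longrightarrow> l 0 n = -1"
    and l_i: "\<And>i i' n. i \<le> i' \<Longrightarrow> i' \<le> n \<Longrightarrow> n \<le> m \<Longrightarrow> l i n \<le> l i' n"
    and k: "1 \<le> k" "k \<le> mhat0 l m q"
  shows "mhat0 l m q + icount m q (l k (mhat0 l m q)) - m < k"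
proof -
  let ?M = "mhat0 l m q"
  define c where "c = l k ?M"
  have mle: "mhat0 l m q \<le> m" and mt: "\<forall>t\<in>{0..1}. t > l (mhat0 l m q + icount m q t - m) (mhat0 l m q)"
    and mx: "\<forall>n. n \<le> m \<and> n > mhat0 l m q \<longrightarrow> (\<exists>t\<in>{0..1}. \<not> t > l (n + icount m q t - m) n)"
    using mhat_props[of m l q, OF l0] by blast+
  consider "c < 0" | "0 \<le> c \<and> c \<le> 1" | "c > 1" by linarith
  then show ?thesis
  proof cases
    case 1
    have "\<forall>j. \<not> q j \<le> c" using 1 qr by (meson le_less_trans not_le)
    then have "{j \<in> {1..m}. q j \<le> c} = {}" by auto
    then have "icount m q c = 0" unfolding icount_def by simp
    then show ?thesis using mle k unfolding c_def by simp
  next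
    case 2
    define j where "j = ?M + icount m q c - m"
    have lt: "c > l j ?M" using mt 2 unfolding j_def by auto
    show ?thesis
    proof (rule ccontr)
      assume "\<not> ?thesis"
      then have "k \<le> j" unfolding j_def c_def by simp
      moreover have "j \<le> ?M" unfolding j_def using icount_le[of m q c] by simp
      ultimately have "l k ?M \<le> l j ?M" using l_i[of k j ?M] mle by linarith
      then show False using lt unfolding c_def by simp
    qed
  next
    case 3
    have "{j \<in> {1..m}. q j \<le> 1} = {1..m}" using qr by auto
    then have "icount m q 1 = m" unfolding icount_def by simp
    moreover have "1 > l (?M + icount m q 1 - m) ?M" using mt by auto
    ultimately have "1 > l ?M ?M" by simp
    moreover have "l k ?M \<le> l ?M ?M" using l_i[of k ?M ?M] k mle by linarith
    ultimately show ?thesis using 3 unfolding c_def by simp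
  qed
qed

lemma ext:
  assumes qr: "\<And>j. 0 \<le> q j \<and> q j \<le> 1"
    and l0: "\<And>n. n \<le> m \<Longrightarrow> l 0 n = -1"
    and l_i: "\<And>i i' n. i \<le> i' \<Longrightarrow> i' \<le> n \<Longrightarrow> n \<le> m \<Longrightarrow> l i n \<le> l i' n"
  shows "A \<subseteq> {1..m} \<Longrightarrow> card A + d = mhat0 l m q \<Longrightarrow>
     (\<forall>k\<in>{1..mhat0 l m q}. card {i\<in>A. q i \<le> l k (mhat0 l m q)} < k) \<Longrightarrow>
     \<exists>A'. A \<subseteq> A' \<and> A' \<subseteq> {1..m} \<and> card A' = mhat0 l m q \<and>
       (\<forall>k\<in>{1..mhat0 l m q}. card {i\<in>A'. q i \<le> l k (mhat0 l m q)} < k)"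
proof (induction d arbitrary: A)
  case 0
  then show ?case by auto
next
  case (Suc d)
  let ?M = "mhat0 l m q"
  have mle: "mhat0 l m q \<le> m" and mt: "\<forall>t\<in>{0..1}. t > l (mhat0 l m q + icount m q t - m) (mhat0 l m q)"
    and mx: "\<forall>n. n \<le> m \<and> n > mhat0 l m q \<longrightarrow> (\<exists>t\<in>{0..1}. \<not> t > l (n + icount m q t - m) n)"
    using mhat_props[of m l q, OF l0] by blast+
  have fA: "finite A" using Suc.prems finite_subset by blast
  have "card A < card {1..m}" using Suc.prems mle by simp
  then have ne: "{1..m} - A \<noteq> {}"
  proof (intro notI)
    assume "{1..m} - A = {}"
    then have "{1..m} \<subseteq> A" by blast
    then have "card {1..m} \<le> card A" using fA card_mono by blast
    then show False using \<open>card A < card {1..m}\<close> by simp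
  qed
  have "\<exists>e. e \<in> {1..m} - A \<and> (\<forall>e'\<in>{1..m} - A. q e' \<le> q e)"
  proof -
    have "Max (q ` ({1..m} - A)) \<in> q ` ({1..m} - A)" using ne by (intro Max_in) auto
    then obtain e where "e \<in> {1..m} - A" "q e = Max (q ` ({1..m} - A))" by auto
    then show ?thesis by (intro exI[of _ e]) auto
  qed
  then obtain e where e: "e \<in> {1..m} - A" "\<And>e'. e' \<in> {1..m} - A \<Longrightarrow> q e' \<le> q e"
    by blast
  define B where "B = insert e A"
  have B1: "B \<subseteq> {1..m}" "card B + d = ?M" using e Suc.prems fA unfolding B_def by auto
  have B2: "\<forall>k\<in>{1..?M}. card {i\<in>B. q i \<le> l k ?M} < k"
  proof
    fix k assume k: "k \<in> {1..?M}"
    define c where "c = l k ?M"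
    define a where "a = card {i\<in>A. q i \<le> c}"
    have a: "a < k" using Suc.prems k unfolding a_def c_def by auto
    show "card {i\<in>B. q i \<le> l k ?M} < k"
    proof (cases "q e \<le> c")
      case False
      then have "{i\<in>B. q i \<le> l k ?M} = {i\<in>A. q i \<le> c}" unfolding B_def c_def by auto
      then show ?thesis using a a_def by simp
    next
      case True
      have eq: "{j \<in> {1..m}. q j \<le> c} = {i\<in>A. q i \<le> c} \<union> ({1..m} - A)"
        using True e(1) Suc.prems(1) order_trans[OF e(2) True] by auto
      have "icount m q c = a + card ({1..m} - A)" unfolding icount_def eq a_def
        by (subst card_Un_disjoint) (use fA in auto)
      also have "card ({1..m} - A) = m - card A" using Suc.prems(1) fA by (simp add: card_Diff_subset)
      finally have ic: "icount m q c = a + (m - card A)" .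
      have "?M + icount m q c - m < k" using KL[of q m l k, OF qr l0 l_i] k unfolding c_def by auto
      then have "a + 1 < k + 0" using ic Suc.prems(2) mle by linarith
      moreover have "{i\<in>B. q i \<le> l k ?M} = insert e {i\<in>A. q i \<le> c}"
        using True unfolding B_def c_def by auto
      moreover have "e \<notin> {i\<in>A. q i \<le> c}" using e by auto
      ultimately show ?thesis using fA unfolding a_def by simp
    qed
  qed
  obtain A' where "B \<subseteq> A'" "A' \<subseteq> {1..m}" "card A' = ?M"
      "\<forall>k\<in>{1..?M}. card {i\<in>A'. q i \<le> l k ?M} < k"
    using Suc.IH[OF B1 B2] by blast
  then show ?case unfolding B_def by blast
qed


lemma card_sum_real:
  assumes "finite A"
  shows "real (card {j\<in>A. P j}) = (\<Sum>j\<in>A. if P j then 1 else (0::real))"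
  using assms by (simp add: sum.inter_filter[symmetric])

theorem mainTheorem9:
  fixes m :: nat
    and F :: "'mu set"
    and P :: "'mu \<Rightarrow> 'x measure"
    and p :: "'x \<Rightarrow> nat \<Rightarrow> real"
    and H :: "nat \<Rightarrow> 'mu set"
    and l :: "nat \<Rightarrow> nat \<Rightarrow> real"
    and \<alpha> :: real
  defines "H0 \<equiv> (\<lambda>\<mu>. {i \<in> {1..m}. \<mu> \<in> H i})"
  assumes prob: "\<And>\<mu>. \<mu> \<in> F \<Longrightarrow> prob_space (P \<mu>)"
    and meas: "\<And>\<mu> i. \<mu> \<in> F \<Longrightarrow> i \<in> {1..m} \<Longrightarrow> (\<lambda>x. p x i) \<in> borel_measurable (P \<mu>)"
    and prange: "\<And>x i. 0 \<le> p x i \<and> p x i \<le> 1"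
    and l0: "\<And>n. n \<le> m \<Longrightarrow> l 0 n = -1"
    and l_n: "\<And>i n n'. i \<le> n \<Longrightarrow> n \<le> n' \<Longrightarrow> n' \<le> m \<Longrightarrow> l i n' \<le> l i n"
    and l_i: "\<And>i i' n. i \<le> i' \<Longrightarrow> i' \<le> n \<Longrightarrow> n \<le> m \<Longrightarrow> l i n \<le> l i' n"
    and level: "\<And>\<mu>. \<mu> \<in> F \<Longrightarrow>
       measure (P \<mu>) {x \<in> space (P \<mu>). phi l (p x) (H0 \<mu>)} \<le> \<alpha>"
  shows "(\<forall>\<mu>\<in>F. measure (P \<mu>)
            {x \<in> space (P \<mu>). JER_event {1..mhat0 l m (p x) + 1} (Rref l m (p x)) (\<lambda>k. k - 1) (H0 \<mu>)}
          \<le> \<alpha>)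
     \<and> (\<forall>x S. S \<subseteq> {1..m} \<longrightarrow>
          V_IP m (phi l (p x)) S = V_JER m {1..mhat0 l m (p x) + 1} (Rref l m (p x)) (\<lambda>k. k - 1) S)"
proof (intro conjI ballI allI impI)
  fix \<mu> assume \<mu>: "\<mu> \<in> F"
  interpret prob_space "P \<mu>" using prob[OF \<mu>] .
  define A where "A = H0 \<mu>"
  have Asub: "A \<subseteq> {1..m}" unfolding A_def H0_def by auto
  have fA: "finite A" using Asub finite_subset by blast
  let ?E = "{x\<in>space (P \<mu>). phi l (p x) A}"
  have "?E = {x\<in>space (P \<mu>). \<exists>i\<in>{1..card A}. real i \<le> (\<Sum>j\<in>A. if p x j \<le> l i (card A) then 1 else (0::real))}"
    unfolding phi_iff[OF fA] card_sum_real[OF fA, symmetric] by simp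
  also have "\<dots> \<in> sets (P \<mu>)"
  proof (intro sets.sets_Collect_finite_Ex)
    fix i
    have "(\<lambda>x. \<Sum>j\<in>A. if p x j \<le> l i (card A) then 1 else (0::real)) \<in> borel_measurable (P \<mu>)"
    proof (rule borel_measurable_sum)
      fix j assume "j \<in> A"
      then have mj: "(\<lambda>x. p x j) \<in> borel_measurable (P \<mu>)" using meas[OF \<mu>] Asub by blast
      show "(\<lambda>x. if p x j \<le> l i (card A) then 1 else (0::real)) \<in> borel_measurable (P \<mu>)"
        by (rule measurable_If) (auto intro: borel_measurable_le[OF mj borel_measurable_const])
    qed
    then show "{x \<in> space (P \<mu>). real i \<le> (\<Sum>j\<in>A. if p x j \<le> l i (card A) then 1 else (0::real))} \<in> sets (P \<mu>)"
      using borel_measurable_le[OF borel_measurable_const] by blast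
  qed auto
  finally have Em: "?E \<in> sets (P \<mu>)" .
  have "{x \<in> space (P \<mu>). JER_event {1..mhat0 l m (p x) + 1} (Rref l m (p x)) (\<lambda>k. k - 1) A} \<subseteq> ?E"
  proof
    fix x assume "x \<in> {x \<in> space (P \<mu>). JER_event {1..mhat0 l m (p x) + 1} (Rref l m (p x)) (\<lambda>k. k - 1) A}"
    moreover have "0 \<le> p x j \<and> p x j \<le> 1" for j using prange by blast
    ultimately show "x \<in> ?E" using jer_phi[of "p x" m l A, OF _ l0 l_n Asub] by blast
  qed
  then have "measure (P \<mu>) {x \<in> space (P \<mu>). JER_event {1..mhat0 l m (p x) + 1} (Rref l m (p x)) (\<lambda>k. k - 1) A}
      \<le> measure (P \<mu>) ?E" using Em by (rule finite_measure_mono)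
  also have "\<dots> \<le> \<alpha>" using level[OF \<mu>] unfolding A_def by simp
  finally show "measure (P \<mu>) {x \<in> space (P \<mu>). JER_event {1..mhat0 l m (p x) + 1} (Rref l m (p x)) (\<lambda>k. k - 1) (H0 \<mu>)} \<le> \<alpha>"
    unfolding A_def .
next
  fix x S
  define q where "q = p x"
  have qr: "\<And>j. 0 \<le> q j \<and> q j \<le> 1" unfolding q_def using prange by blast
  let ?M = "mhat0 l m q"
  let ?K = "{1..?M + 1}"
  let ?R = "Rref l m q"
  define X where "X = {card (A \<inter> S) | A. A \<subseteq> {1..m} \<and> \<not> phi l q A}"
  define Y where "Y = (\<lambda>A. card (S \<inter> A)) ` Aset m ?K ?R (\<lambda>k. k - 1)"
  have XY: "X \<subseteq> Y"
  proof
    fix n assume "n \<in> X"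
    then obtain A where A: "n = card (A \<inter> S)" "A \<subseteq> {1..m}" "\<not> phi l q A" unfolding X_def by blast
    have "\<not> JER_event ?K ?R (\<lambda>k. k - 1) A" using jer_phi[of q m l A, OF qr l0 l_n A(2)] A(3) by blast
    then have "A \<in> Aset m ?K ?R (\<lambda>k. k - 1)" using A(2) unfolding Aset_def JER_event_def by auto
    then show "n \<in> Y" unfolding Y_def A(1) by (metis (no_types, lifting) Int_commute image_eqI)
  qed
  have fY: "finite Y"
  proof -
    have "Aset m ?K ?R (\<lambda>k. k - 1) \<subseteq> Pow {1..m}" unfolding Aset_def by auto
    then have "finite (Aset m ?K ?R (\<lambda>k. k - 1))" by (rule finite_subset) auto
    then show ?thesis unfolding Y_def by simp
  qed
  have "0 \<in> X" unfolding X_def phi_def by (intro CollectI exI[of _ "{}"]) auto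
  then have neX: "X \<noteq> {}" by blast
  have dom: "\<forall>y\<in>Y. \<exists>z\<in>X. y \<le> z"
  proof
    fix y assume "y \<in> Y"
    then obtain A where A: "y = card (S \<inter> A)" "A \<in> Aset m ?K ?R (\<lambda>k. k - 1)" unfolding Y_def by blast
    have As: "A \<subseteq> {1..m}" and Ak: "\<forall>k\<in>?K. card (?R k \<inter> A) \<le> k - 1" using A(2) unfolding Aset_def by auto
    have "card ({1..m} \<inter> A) \<le> ?M" using Ak[rule_format, of "?M+1"] unfolding Rref_def by simp
    then have cA: "card A \<le> ?M" using As by (simp add: Int_absorb1)
    have kk: "\<forall>k\<in>{1..?M}. card {i\<in>A. q i \<le> l k ?M} < k"
    proof
      fix k assume k: "k \<in> {1..?M}"
      have "?R k \<inter> A = {i\<in>A. q i \<le> l k ?M}" using k As unfolding Rref_def by auto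
      then show "card {i\<in>A. q i \<le> l k ?M} < k" using Ak[rule_format, of k] k by auto
    qed
    obtain A' where A': "A \<subseteq> A'" "A' \<subseteq> {1..m}" "card A' = ?M"
        "\<forall>k\<in>{1..?M}. card {i\<in>A'. q i \<le> l k ?M} < k"
      using ext[of q m l A "?M - card A", OF qr l0 l_i As _ kk] cA by auto
    have fA': "finite A'" using A'(2) finite_subset by blast
    have "\<not> phi l q A'" unfolding phi_iff[OF fA'] using A'(3,4) by auto
    then have "card (A' \<inter> S) \<in> X" unfolding X_def using A'(2) by blast
    moreover have "y \<le> card (A' \<inter> S)" unfolding A(1) using A'(1) fA' by (intro card_mono) auto
    ultimately show "\<exists>z\<in>X. y \<le> z" by blast
  qed
  have fX: "finite X" using XY fY finite_subset by blast
  have "Max X = Max Y"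
  proof (rule antisym)
    show "Max X \<le> Max Y" using XY neX fY by (rule Max_mono)
    have "Y \<noteq> {}" using XY neX by blast
    then have "Max Y \<in> Y" using fY Max_in by blast
    then obtain z where "z \<in> X" "Max Y \<le> z" using dom by blast
    then show "Max Y \<le> Max X" using fX Max_ge order_trans by blast
  qed
  then show "V_IP m (phi l (p x)) S = V_JER m {1..mhat0 l m (p x) + 1} (Rref l m (p x)) (\<lambda>k. k - 1) S"
    unfolding V_IP_def V_JER_def X_def Y_def q_def by simp
qed

end
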